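(* Let $k$ be a field, $t\ge1$, $n_1,\dots,n_t\ge1$ and $a_1,\dots,a_t\ge1$ integers with $d=\sum_{s=1}^ta_s\ge2$. Let $K^{d(\mathbf a)}_{\mathbf n}$ be the $d(a_1,\dots,a_t)$-complete multipartite hypergraph. Then $R/I(K^{d(\mathbf a)}_{\mathbf n})$ has a linear resolution, and for $i\ge1$, $\beta_{i,j}(K^{d(\mathbf a)}_{\mathbf n})\ne0$ only if $j=i+(d-1)$.
   Context: $K^{d(\mathbf a)}_{\mathbf n}$ is the hypergraph on the disjoint union $B_1\sqcup\cdots\sqcup B_t$ ($|B_s|=n_s$) whose edges are all subsets $E$ with $|E\cap B_s|=a_s$ for every $s$. $R$ is the polynomial ring over $k$ with one variable per vertex; $I(\mathcal H)$ is generated by $\prod_{v\in E}x_v$, $E$ an edge; $\beta_{i,j}=\dim_k\mathrm{Tor}^R_i(R/I(\mathcal H),k)_j$. $R/I$ has a linear resolution if there is $c$ with $\beta_{i,j}=0$ for all $i\ge1$, $j\ne i+c-1$. *)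

theory Defs
  imports Complex_Main "HOL-Library.Function_Algebras"
begin

text \<open>
R = k[x_v : v in V].
A monomial of R is an exponent vector m :: nat => nat vanishing outside V.
Tor^R_i(R/I,k) is computed as the homology of (R/I) tensor K, where K is the
Koszul complex on the variables x_v, v in V (the standard free resolution of
k over R).  R tensor K_i has k-basis the pairs (m,F) (the element x^m e_F),
F a subset of V of size i, with internal degree |m| + |F|.
\<close>

type_synonym 'k kchain = "((nat \<Rightarrow> nat) \<times> nat set) \<Rightarrow> 'k"

definition fscale :: "'k::field \<Rightarrow> 'k kchain \<Rightarrow> 'k kchain" where
  "fscale a f = (\<lambda>x. a * f x)"

definition kbasis :: "nat set \<Rightarrow> nat \<Rightarrow> nat \<Rightarrow> ((nat \<Rightarrow> nat) \<times> nat set) set" where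
  "kbasis V i j = {(m, F). (\<forall>v. v \<notin> V \<longrightarrow> m v = 0) \<and> F \<subseteq> V \<and> card F = i
                         \<and> (\<Sum>v\<in>V. m v) + i = j}"

definition kchains :: "nat set \<Rightarrow> nat \<Rightarrow> nat \<Rightarrow> ('k::field) kchain set" where
  "kchains V i j = {c. \<forall>p. p \<notin> kbasis V i j \<longrightarrow> c p = 0}"

text \<open>Koszul differential: d(x^u e_G) = sum over v in G of
  (-1)^(number of w in G with w < v) x^u x_v e_(G - v).  Below, the coefficient of
  x^m e_F in d(c).\<close>
definition kdiff :: "nat set \<Rightarrow> ('k::field) kchain \<Rightarrow> 'k kchain" where
  "kdiff V c = (\<lambda>(m, F). \<Sum>v\<in>V - F.
      if 1 \<le> m v then (-1) ^ card {w\<in>F. w < v} * c (m(v := m v - 1), insert v F) else 0)"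

text \<open>The edge ideal I(H) = (x_E : E an edge).  A monomial lies in it iff it is
  divisible by some x_E; a polynomial lies in it iff all its monomials do.\<close>
definition in_edge_ideal :: "nat set set \<Rightarrow> (nat \<Rightarrow> nat) \<Rightarrow> bool" where
  "in_edge_ideal Edges m \<longleftrightarrow> (\<exists>E\<in>Edges. \<forall>v\<in>E. 1 \<le> m v)"

definition ideal_chains :: "nat set \<Rightarrow> nat set set \<Rightarrow> nat \<Rightarrow> nat \<Rightarrow> ('k::field) kchain set" where
  "ideal_chains V Edges i j =
     {c \<in> kchains V i j. \<forall>m F. c (m, F) \<noteq> 0 \<longrightarrow> in_edge_ideal Edges m}"

text \<open>Cycles of (R/I) tensor K in degree (i,j), lifted to R tensor K.\<close>
definition cycles_lift :: "nat set \<Rightarrow> nat set set \<Rightarrow> nat \<Rightarrow> nat \<Rightarrow> ('k::field) kchain set" where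
  "cycles_lift V Edges i j =
     {c \<in> kchains V i j. kdiff V c \<in> ideal_chains V Edges (i - 1) j}"

text \<open>Boundaries of (R/I) tensor K in degree (i,j), lifted to R tensor K.\<close>
definition bounds_lift :: "nat set \<Rightarrow> nat set set \<Rightarrow> nat \<Rightarrow> nat \<Rightarrow> ('k::field) kchain set" where
  "bounds_lift V Edges i j =
     {kdiff V c + b | c b. c \<in> kchains V (Suc i) j \<and> b \<in> ideal_chains V Edges i j}"

text \<open>beta_{i,j} = dim_k Tor_i(R/I(H), k)_j = dim (cycles / boundaries), for i >= 1.
  The type 'k is the field k.\<close>
definition betti :: "'k::field itself \<Rightarrow> nat set \<Rightarrow> nat set set \<Rightarrow> nat \<Rightarrow> nat \<Rightarrow> nat" where
  "betti _ V Edges i j =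
     vector_space.dim (fscale :: 'k \<Rightarrow> 'k kchain \<Rightarrow> 'k kchain) (cycles_lift V Edges i j)
   - vector_space.dim (fscale :: 'k \<Rightarrow> 'k kchain \<Rightarrow> 'k kchain) (bounds_lift V Edges i j)"

definition linear_resolution :: "'k::field itself \<Rightarrow> nat set \<Rightarrow> nat set set \<Rightarrow> bool" where
  "linear_resolution K V Edges \<longleftrightarrow>
     (\<exists>c::nat. \<forall>i\<ge>1. \<forall>j. j \<noteq> i + c - 1 \<longrightarrow> betti K V Edges i j = 0)"

text \<open>Complete multipartite hypergraph K^{d(a)}_n: blocks B_s (s < t) are consecutive
  intervals of naturals of length n s.\<close>
definition block :: "(nat \<Rightarrow> nat) \<Rightarrow> nat \<Rightarrow> nat set" where
  "block n s = {(\<Sum>r<s. n r) ..< (\<Sum>r<s. n r) + n s}"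

definition mp_vertices :: "nat \<Rightarrow> (nat \<Rightarrow> nat) \<Rightarrow> nat set" where
  "mp_vertices t n = (\<Union>s<t. block n s)"

definition mp_edges :: "nat \<Rightarrow> (nat \<Rightarrow> nat) \<Rightarrow> (nat \<Rightarrow> nat) \<Rightarrow> nat set set" where
  "mp_edges t n a = {E. E \<subseteq> mp_vertices t n \<and> (\<forall>s<t. card (E \<inter> block n s) = a s)}"

end

theory Submission
  imports Defs
begin

definition sg :: "nat set \<Rightarrow> nat \<Rightarrow> 'k::comm_ring_1" where
  "sg F v = (-1) ^ card {w\<in>F. w < v}"

definition bd :: "nat set \<Rightarrow> (nat set \<Rightarrow> 'k::comm_ring_1) \<Rightarrow> nat set \<Rightarrow> 'k" where
  "bd S f F = (\<Sum>v\<in>S - F. sg F v * f (insert v F))"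

definition cone :: "nat \<Rightarrow> (nat set \<Rightarrow> 'k::comm_ring_1) \<Rightarrow> nat set \<Rightarrow> 'k" where
  "cone w f G = (if w \<in> G then sg (G - {w}) w * f (G - {w}) else 0)"

lemma sg_sq: "sg F v * sg F v = (1::'k::comm_ring_1)"
  unfolding sg_def by (simp add: power_mult_distrib[symmetric])

lemma sg_insert:
  assumes "v \<notin> F" "v \<noteq> w"
  shows "(sg (insert v F) w :: 'k::comm_ring_1) = (if v < w then -1 else 1) * sg F w"
proof -
  have "{x\<in>insert v F. x < w} = (if v < w then insert v {x\<in>F. x < w} else {x\<in>F. x < w})"
    by auto
  moreover have "finite {x\<in>F. x < w}" by (rule finite_subset[of _ "{..<w}"]) auto
  ultimately show ?thesis using assms unfolding sg_def by auto
qed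

lemma sg_remove_self: "sg (F - {w}) w = sg F w"
proof -
  have "{x\<in>F - {w}. x < w} = {x\<in>F. x < w}" by auto
  then show ?thesis unfolding sg_def by simp
qed

lemma cone_identity:
  fixes f :: "nat set \<Rightarrow> 'k::comm_ring_1"
  assumes S: "finite S" and w: "w \<in> S" and F: "F \<subseteq> S"
  shows "bd S (cone w f) F + cone w (bd S f) F = f F"
proof (cases "w \<in> F")
  case False
  have "bd S (cone w f) F = (\<Sum>v\<in>insert w (S - F - {w}). sg F v * cone w f (insert v F))"
    unfolding bd_def using w False by (intro sum.cong) auto
  also have "\<dots> = sg F w * cone w f (insert w F) + (\<Sum>v\<in>S - F - {w}. sg F v * cone w f (insert v F))"
    using S by (subst sum.insert) auto
  also have "(\<Sum>v\<in>S - F - {w}. sg F v * cone w f (insert v F)) = 0"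
    using False by (intro sum.neutral) (auto simp: cone_def)
  also have "sg F w * cone w f (insert w F) = f F"
    using False by (simp add: cone_def sg_sq mult.assoc[symmetric])
  finally have "bd S (cone w f) F = f F" by simp
  moreover have "cone w (bd S f) F = 0" using False unfolding cone_def by simp
  ultimately show ?thesis by simp
next
  case True
  define F0 where "F0 = F - {w}"
  have FF0: "F = insert w F0" "w \<notin> F0" using True by (auto simp: F0_def)
  have fin: "finite F0" using F S F0_def by (meson finite_Diff finite_subset)
  have e1: "S - F0 = insert w (S - F)" using FF0 w by auto
  have "cone w (bd S f) F = sg F0 w * (\<Sum>v\<in>S - F0. sg F0 v * f (insert v F0))"
    unfolding cone_def bd_def using True F0_def by simp
  also have "\<dots> = sg F0 w * (\<Sum>v\<in>insert w (S - F). sg F0 v * f (insert v F0))"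
    unfolding e1 ..
  also have "\<dots> = sg F0 w * (sg F0 w * f (insert w F0)) + sg F0 w * (\<Sum>v\<in>S - F. sg F0 v * f (insert v F0))"
    using S True by (subst sum.insert) (auto simp: distrib_left)
  also have "sg F0 w * (sg F0 w * f (insert w F0)) = f F"
    by (simp add: FF0 mult.assoc[symmetric] sg_sq)
  finally have c: "cone w (bd S f) F = f F + sg F0 w * (\<Sum>v\<in>S - F. sg F0 v * f (insert v F0))" .
  have b: "bd S (cone w f) F = (\<Sum>v\<in>S - F. sg F v * (sg (insert v F0) w * f (insert v F0)))"
    unfolding bd_def cone_def using FF0
  proof (intro sum.cong refl)
    fix v assume "v \<in> S - F"
    then have "insert v F - {w} = insert v F0" "v \<noteq> w" using FF0 by auto
    then show "sg F v * (if w \<in> insert v F then sg (insert v F - {w}) w * f (insert v F - {w}) else 0) =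
         sg F v * (sg (insert v F0) w * f (insert v F0))" using True by simp
  qed
  have "bd S (cone w f) F + sg F0 w * (\<Sum>v\<in>S - F. sg F0 v * f (insert v F0)) = 
     (\<Sum>v\<in>S - F. sg F v * (sg (insert v F0) w * f (insert v F0)) + sg F0 w * (sg F0 v * f (insert v F0)))"
    unfolding b by (simp add: sum.distrib sum_distrib_left)
  also have "\<dots> = 0"
  proof (intro sum.neutral ballI)
    fix v assume v: "v \<in> S - F"
    then have "v \<noteq> w" "v \<notin> F0" using True FF0 by auto
    then have "sg F v = ((if w < v then -1 else 1) * sg F0 v :: 'k)"
         "sg (insert v F0) w = ((if v < w then -1 else 1) * sg F0 w :: 'k)"
      using sg_insert[OF FF0(2), of v] sg_insert[OF \<open>v \<notin> F0\<close>, of w] FF0(1) by auto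
    then show "sg F v * (sg (insert v F0) w * f (insert v F0)) + sg F0 w * (sg F0 v * f (insert v F0)) = 0"
      using \<open>v \<noteq> w\<close> by (auto simp: algebra_simps)
  qed
  finally show ?thesis using c by (simp add: algebra_simps)
qed

lemma antisym_sum_zero:
  fixes \<phi> :: "nat \<Rightarrow> nat \<Rightarrow> 'k::comm_ring_1"
  assumes A: "finite A" and anti: "\<And>v u. v \<in> A \<Longrightarrow> u \<in> A \<Longrightarrow> v \<noteq> u \<Longrightarrow> \<phi> v u = - \<phi> u v"
  shows "(\<Sum>v\<in>A. \<Sum>u\<in>A - {v}. \<phi> v u) = 0"
proof -
  have split: "(\<Sum>u\<in>A - {v}. \<phi> v u) = (\<Sum>u\<in>A. (if u < v then \<phi> v u else 0)) + (\<Sum>u\<in>A. (if v < u then \<phi> v u else 0))" for v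
  proof -
    have "(\<Sum>u\<in>A - {v}. \<phi> v u) = (\<Sum>u\<in>A. (if u \<noteq> v then \<phi> v u else 0))"
      using A by (intro sum.mono_neutral_cong_left) auto
    also have "\<dots> = (\<Sum>u\<in>A. (if u < v then \<phi> v u else 0) + (if v < u then \<phi> v u else 0))"
      by (intro sum.cong refl) auto
    finally show ?thesis by (simp add: sum.distrib)
  qed
  have "(\<Sum>v\<in>A. \<Sum>u\<in>A. (if v < u then \<phi> v u else 0)) = (\<Sum>u\<in>A. \<Sum>v\<in>A. (if v < u then \<phi> v u else 0))"
    by (rule sum.swap)
  also have "\<dots> = (\<Sum>v\<in>A. \<Sum>u\<in>A. (if u < v then - \<phi> v u else 0))"
  proof (intro sum.cong refl)
    fix v u assume "v \<in> A" "u \<in> A"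
    then show "(if v < u then \<phi> v u else 0) = (if v < u then - \<phi> u v else 0)"
      using anti[of v u] by (cases "v < u") auto
  qed
  finally have sw: "(\<Sum>v\<in>A. \<Sum>u\<in>A. (if v < u then \<phi> v u else 0)) = (\<Sum>v\<in>A. \<Sum>u\<in>A. (if u < v then - \<phi> v u else 0))" .
  have "(\<Sum>v\<in>A. \<Sum>u\<in>A - {v}. \<phi> v u) = (\<Sum>v\<in>A. \<Sum>u\<in>A. (if u < v then \<phi> v u else 0)) + (\<Sum>v\<in>A. \<Sum>u\<in>A. (if v < u then \<phi> v u else 0))"
    by (simp add: split sum.distrib)
  also have "\<dots> = (\<Sum>v\<in>A. \<Sum>u\<in>A. (if u < v then \<phi> v u else 0) + (if u < v then - \<phi> v u else 0))"
    unfolding sw by (simp add: sum.distrib)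
  also have "\<dots> = 0" by (intro sum.neutral ballI) simp
  finally show ?thesis .
qed

lemma bd_bd:
  fixes f :: "nat set \<Rightarrow> 'k::comm_ring_1"
  assumes S: "finite S"
  shows "bd S (bd S f) F = 0"
proof -
  define \<phi> where "\<phi> v u = (sg F v * sg (insert v F) u * f (insert u (insert v F)) :: 'k)" for v u
  have "bd S (bd S f) F = (\<Sum>v\<in>S - F. \<Sum>u\<in>(S - F) - {v}. \<phi> v u)"
  proof (unfold bd_def, intro sum.cong refl)
    fix v assume v: "v \<in> S - F"
    have "S - insert v F = (S - F) - {v}" by auto
    then show "sg F v * (\<Sum>u\<in>S - insert v F. sg (insert v F) u * f (insert u (insert v F))) = (\<Sum>u\<in>S - F - {v}. \<phi> v u)"
      unfolding \<phi>_def by (simp add: sum_distrib_left mult.assoc)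
  qed
  also have "\<dots> = 0"
  proof (rule antisym_sum_zero)
    show "finite (S - F)" using S by simp
    fix v u assume "v \<in> S - F" "u \<in> S - F" "v \<noteq> u"
    then show "\<phi> v u = - \<phi> u v"
    proof -
      have a: "sg (insert v F) u = ((if v < u then -1 else 1) * sg F u :: 'k)" using sg_insert[of v F u] \<open>v \<in> S - F\<close> \<open>v \<noteq> u\<close> by auto
      have b: "sg (insert u F) v = ((if u < v then -1 else 1) * sg F v :: 'k)" using sg_insert[of u F v] \<open>u \<in> S - F\<close> \<open>v \<noteq> u\<close> by auto
      have c: "insert u (insert v F) = insert v (insert u F)" by auto
      show ?thesis unfolding \<phi>_def a b c using \<open>v \<noteq> u\<close> by (cases "v < u") auto
    qed
  qed
  finally show ?thesis .
qed

lemma bd_diff: "bd S (\<lambda>F. f F - g F) F = bd S f F - bd S g F"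
  unfolding bd_def by (simp add: algebra_simps sum_subtractf)

lemma bd_add: "bd S (\<lambda>F. f F + g F) F = bd S f F + bd S g F"
  unfolding bd_def by (simp add: algebra_simps sum.distrib)

lemma bd_nz: "bd S f F \<noteq> 0 \<Longrightarrow> \<exists>v\<in>S - F. f (insert v F) \<noteq> 0"
  unfolding bd_def by (metis (no_types, lifting) mult_zero_right sum.neutral)

lemma bd_cong: "(\<And>v. v \<in> S - F \<Longrightarrow> f (insert v F) = g (insert v F)) \<Longrightarrow> bd S f F = bd S g F"
  unfolding bd_def by simp

definition UU :: "(nat \<Rightarrow> nat set) \<Rightarrow> nat \<Rightarrow> nat set" where
  "UU X t = (\<Union>s<t. X s)"

definition Gam :: "(nat \<Rightarrow> nat set) \<Rightarrow> (nat \<Rightarrow> nat) \<Rightarrow> nat \<Rightarrow> nat set set" where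
  "Gam X r t = {F. F \<subseteq> UU X t \<and> (\<forall>s<t. card (F \<inter> X s) \<le> r s)}"

lemma UU_Suc: "UU X (Suc t) = UU X t \<union> X t"
  unfolding UU_def by (auto simp: lessThan_Suc)

lemma UU_finite: "(\<And>s. finite (X s)) \<Longrightarrow> finite (UU X t)"
  unfolding UU_def by auto

lemma Gam_down:
  assumes fin: "\<And>s. finite (X s)" and F: "F \<in> Gam X r t" and H: "H \<subseteq> F"
  shows "H \<in> Gam X r t"
proof -
  have "card (H \<inter> X s) \<le> card (F \<inter> X s)" for s
    using fin H by (intro card_mono) auto
  moreover have "H \<subseteq> UU X t" using F H unfolding Gam_def by auto
  moreover have "\<forall>s<t. card (F \<inter> X s) \<le> r s" using F unfolding Gam_def by auto
  ultimately show ?thesis unfolding Gam_def using order.trans by blast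
qed

lemma bd_supp:
  assumes fin: "\<And>s. finite (X s)" and f: "\<And>F. f F \<noteq> 0 \<Longrightarrow> F \<in> Gam X r t"
    and nz: "bd S f F \<noteq> 0"
  shows "F \<in> Gam X r t"
proof -
  obtain v where "f (insert v F) \<noteq> 0" using bd_nz[OF nz] by blast
  then show ?thesis using Gam_down[OF fin f] by blast
qed

lemma key_lemma:
  fixes X :: "nat \<Rightarrow> nat set" and r :: "nat \<Rightarrow> nat"
  assumes fin: "\<And>s. finite (X s)"
    and rle: "\<And>s. r s \<le> card (X s)"
    and ord: "\<And>s s' x y. s < s' \<Longrightarrow> x \<in> X s \<Longrightarrow> y \<in> X s' \<Longrightarrow> x < y"
  shows "\<And>z :: nat set \<Rightarrow> 'k::comm_ring_1.
     (\<forall>F. z F \<noteq> 0 \<longrightarrow> F \<in> Gam X r t \<and> card F \<noteq> (\<Sum>s<t. r s)) \<Longrightarrow> (\<forall>F. bd (UU X t) z F = 0)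
     \<Longrightarrow> \<exists>g. (\<forall>F. g F \<noteq> 0 \<longrightarrow> F \<in> Gam X r t) \<and> (\<forall>F. z F = bd (UU X t) g F)"
proof (induction t)
  case 0
  have "z F = 0" for F
  proof (rule ccontr)
    assume "z F \<noteq> 0"
    then have "F \<in> Gam X r 0" "card F \<noteq> 0" using 0 by auto
    then show False unfolding Gam_def UU_def by auto
  qed
  then show ?case by (intro exI[of _ "\<lambda>_. 0"]) (auto simp: bd_def)
next
  case (Suc t)
  define S' where "S' = UU X t"
  define T where "T = X t"
  define R where "R = (\<Sum>s<t. r s)"
  define rt where "rt = r t"
  have U: "UU X (Suc t) = S' \<union> T" unfolding S'_def T_def by (rule UU_Suc)
  have finS': "finite S'" unfolding S'_def by (rule UU_finite[OF fin])
  have finT: "finite T" unfolding T_def by (rule fin)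
  have lt: "\<And>a b. a \<in> S' \<Longrightarrow> b \<in> T \<Longrightarrow> a < b"
    unfolding S'_def T_def UU_def using ord by blast
  have disj: "S' \<inter> T = {}" using lt by blast
  have Gs: "F \<in> Gam X r (Suc t) \<longleftrightarrow> F \<subseteq> S' \<union> T \<and> F \<inter> S' \<in> Gam X r t \<and> card (F \<inter> T) \<le> rt" for F
  proof -
    have "F \<inter> X s = (F \<inter> S') \<inter> X s" if "s < t" for s
      using that unfolding S'_def UU_def by auto
    then show ?thesis unfolding Gam_def U rt_def T_def S'_def[symmetric]
      by (auto simp: less_Suc_eq)
  qed
  have GsS: "F \<in> Gam X r (Suc t) \<Longrightarrow> F \<subseteq> S' \<union> T" for F using Gs by blast
  have sgAB: "(sg (A \<union> B) v :: 'k) = sg A v" if "B \<subseteq> T" "v \<in> S'" for A B v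
  proof -
    have "{x \<in> A \<union> B. x < v} = {x\<in>A. x < v}" using that lt by fastforce
    then show ?thesis unfolding sg_def by simp
  qed
  have zS: "z F \<noteq> 0 \<Longrightarrow> F \<in> Gam X r (Suc t) \<and> card F \<noteq> R + rt" for F
    using Suc.prems(1) unfolding R_def rt_def by auto
  have zbd: "bd (S' \<union> T) z F = 0" for F using Suc.prems(2) U by simp
  have Ttop: "z F = 0" if "card (F \<inter> T) > rt" for F
    using that zS Gs by fastforce
  define y where "y B A = (if A \<subseteq> S' then z (A \<union> B) else 0)" for B A
  have ycond: "\<exists>g. (\<forall>F. g F \<noteq> 0 \<longrightarrow> F \<in> Gam X r t) \<and> (\<forall>A. y B A = bd S' g A)"
    if B: "B \<subseteq> T" "card B = rt" for B
  proof -
    have finB: "finite B" using B finT finite_subset by blast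
    have y1: "y B A \<noteq> 0 \<longrightarrow> A \<in> Gam X r t \<and> card A \<noteq> R" for A
    proof
      assume "y B A \<noteq> 0"
      then have A: "A \<subseteq> S'" "z (A \<union> B) \<noteq> 0" unfolding y_def by (auto split: if_splits)
      then have G: "A \<union> B \<in> Gam X r (Suc t)" "card (A \<union> B) \<noteq> R + rt" using zS by auto
      have "(A \<union> B) \<inter> S' = A" using A B disj by auto
      moreover have "card (A \<union> B) = card A + card B"
        using A B disj finB finS' by (intro card_Un_disjoint) (auto intro: finite_subset)
      ultimately show "A \<in> Gam X r t \<and> card A \<noteq> R" using G Gs B by auto
    qed
    have y2: "bd S' (y B) A = 0" for A
    proof (cases "A \<subseteq> S'")
      case False
      then show ?thesis unfolding bd_def y_def by (intro sum.neutral) auto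
    next
      case True
      have "0 = bd (S' \<union> T) z (A \<union> B)" using zbd by simp
      also have "\<dots> = (\<Sum>v\<in>(S' - A) \<union> (T - B). sg (A \<union> B) v * z (insert v (A \<union> B)))"
        unfolding bd_def using True B disj by (intro sum.cong) auto
      also have "\<dots> = (\<Sum>v\<in>S' - A. sg (A \<union> B) v * z (insert v (A \<union> B))) + (\<Sum>v\<in>T - B. sg (A \<union> B) v * z (insert v (A \<union> B)))"
        using finS' finT disj by (intro sum.union_disjoint) auto
      also have "(\<Sum>v\<in>T - B. sg (A \<union> B) v * z (insert v (A \<union> B))) = 0"
      proof (intro sum.neutral ballI)
        fix v assume v: "v \<in> T - B"
        have "insert v (A \<union> B) \<inter> T = insert v B" using True disj B v by auto
        then have "card (insert v (A \<union> B) \<inter> T) = Suc rt" using v finB B by simp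
        then show "sg (A \<union> B) v * z (insert v (A \<union> B)) = 0" using Ttop by simp
      qed
      also have "(\<Sum>v\<in>S' - A. sg (A \<union> B) v * z (insert v (A \<union> B))) = bd S' (y B) A"
        unfolding bd_def y_def
      proof (intro sum.cong refl)
        fix v assume "v \<in> S' - A"
        then show "sg (A \<union> B) v * z (insert v (A \<union> B)) = sg A v * (if insert v A \<subseteq> S' then z (insert v A \<union> B) else 0)"
          using True sgAB[OF B(1), of v A] by simp
      qed
      finally show ?thesis by simp
    qed
    show ?thesis using Suc.IH[of "y B"] y1 y2 unfolding R_def S'_def by blast
  qed
  define gB where "gB B = (SOME g. (\<forall>F. g F \<noteq> 0 \<longrightarrow> F \<in> Gam X r t) \<and> (\<forall>A. y B A = bd S' g A))" for B
  have gB: "(\<forall>F. gB B F \<noteq> 0 \<longrightarrow> F \<in> Gam X r t) \<and> (\<forall>A. y B A = bd S' (gB B) A)"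
    if "B \<subseteq> T" "card B = rt" for B
    unfolding gB_def using someI_ex[OF ycond[OF that]] .
  define G where "G F = (if F \<subseteq> S' \<union> T \<and> card (F \<inter> T) = rt then gB (F \<inter> T) (F \<inter> S') else 0)" for F
  have Gsupp: "G F \<noteq> 0 \<Longrightarrow> F \<in> Gam X r (Suc t)" for F
  proof -
    assume nz: "G F \<noteq> 0"
    then have c: "F \<subseteq> S' \<union> T" "card (F \<inter> T) = rt" and g: "gB (F \<inter> T) (F \<inter> S') \<noteq> 0"
      unfolding G_def by (auto split: if_splits)
    have "F \<inter> S' \<in> Gam X r t" using gB[of "F \<inter> T"] c g by blast
    then show ?thesis using Gs c by simp
  qed
  define z' where "z' F = z F - bd (S' \<union> T) G F" for F
  have z'spt: "z' F \<noteq> 0 \<Longrightarrow> F \<in> Gam X r (Suc t)" for F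
  proof -
    assume "z' F \<noteq> 0"
    then have "z F \<noteq> 0 \<or> bd (S' \<union> T) G F \<noteq> 0" unfolding z'_def by auto
    then show ?thesis using zS bd_supp[OF fin Gsupp] by blast
  qed
  have z'bd: "bd (S' \<union> T) z' F = 0" for F
    unfolding z'_def bd_diff using zbd bd_bd[of "S' \<union> T" G] finS' finT by simp
  have z'top: "z' F = 0" if F: "F \<subseteq> S' \<union> T" "card (F \<inter> T) = rt" for F
  proof -
    define A where "A = F \<inter> S'"
    define B where "B = F \<inter> T"
    have FAB: "F = A \<union> B" using F unfolding A_def B_def by auto
    have B: "B \<subseteq> T" "card B = rt" using F unfolding B_def by auto
    have finB: "finite B" using B finT finite_subset by blast
    have AS: "A \<subseteq> S'" unfolding A_def by auto
    have e: "S' \<union> T - F = (S' - A) \<union> (T - B)" unfolding A_def B_def by blast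
    have "bd (S' \<union> T) G F = (\<Sum>v\<in>(S' - A) \<union> (T - B). sg F v * G (insert v F))"
      unfolding bd_def e ..
    also have "\<dots> = (\<Sum>v\<in>S' - A. sg F v * G (insert v F)) + (\<Sum>v\<in>T - B. sg F v * G (insert v F))"
      using finS' finT disj by (intro sum.union_disjoint) auto
    also have "(\<Sum>v\<in>T - B. sg F v * G (insert v F)) = 0"
    proof (intro sum.neutral ballI)
      fix v assume v: "v \<in> T - B"
      have "insert v F \<inter> T = insert v B" using v unfolding B_def by auto
      then have "card (insert v F \<inter> T) = Suc rt" using v finB B by simp
      then show "sg F v * G (insert v F) = 0" unfolding G_def by simp
    qed
    also have "(\<Sum>v\<in>S' - A. sg F v * G (insert v F)) = bd S' (gB B) A"
      unfolding bd_def
    proof (intro sum.cong refl)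
      fix v assume v: "v \<in> S' - A"
      have "insert v F \<inter> T = B" "insert v F \<inter> S' = insert v A" "insert v F \<subseteq> S' \<union> T"
        using v F disj unfolding A_def B_def by auto
      moreover have "sg F v = (sg A v :: 'k)" using sgAB[of B v A] B v FAB by simp
      moreover have "card (insert v F \<inter> T) = rt" using \<open>insert v F \<inter> T = B\<close> B by simp
      ultimately show "sg F v * G (insert v F) = sg A v * gB B (insert v A)"
        unfolding G_def by simp
    qed
    also have "bd S' (gB B) A = y B A" using gB[OF B] by simp
    also have "y B A = z F" unfolding y_def using AS FAB by simp
    finally show ?thesis unfolding z'_def by simp
  qed
  have z'low: "z' F \<noteq> 0 \<Longrightarrow> F \<in> Gam X r (Suc t) \<and> card (F \<inter> T) < rt" for F
  proof -
    assume nz: "z' F \<noteq> 0"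
    then have F: "F \<in> Gam X r (Suc t)" by (rule z'spt)
    then have "F \<subseteq> S' \<union> T" "card (F \<inter> T) \<le> rt" using Gs by auto
    moreover have "card (F \<inter> T) \<noteq> rt" using z'top nz \<open>F \<subseteq> S' \<union> T\<close> by blast
    ultimately show ?thesis using F by simp
  qed
  show ?case
  proof (cases "rt = 0")
    case True
    have "z F = bd (S' \<union> T) G F" for F
    proof -
      have "z' F = 0" using z'low[of F] True by auto
      then show ?thesis unfolding z'_def by simp
    qed
    then show ?thesis using Gsupp U by auto
  next
    case False
    then have "T \<noteq> {}" using rle[of t] unfolding rt_def T_def by auto
    then obtain w where w: "w \<in> T" by blast
    define g where "g F = G F + cone w z' F" for F
    have cz: "z' F = bd (S' \<union> T) (cone w z') F" for F
    proof (cases "F \<subseteq> S' \<union> T")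
      case True
      have c0: "cone w (bd (S' \<union> T) z') F = 0" unfolding cone_def z'bd by simp
      have "bd (S' \<union> T) (cone w z') F + cone w (bd (S' \<union> T) z') F = z' F"
        by (rule cone_identity) (use True w finS' finT in auto)
      then show ?thesis unfolding c0 by simp
    next
      case False
      then obtain x where x: "x \<in> F" "x \<notin> S' \<union> T" by blast
      have "z' F = 0"
      proof (rule ccontr)
        assume "z' F \<noteq> 0"
        then have "F \<in> Gam X r (Suc t)" by (rule z'spt)
        then show False using GsS False by blast
      qed
      moreover have "bd (S' \<union> T) (cone w z') F = 0"
        unfolding bd_def
      proof (intro sum.neutral ballI)
        fix v assume v: "v \<in> S' \<union> T - F"
        have "x \<in> insert v F - {w}" using x w by blast
        then have "\<not> insert v F - {w} \<subseteq> S' \<union> T" using x by blast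
        then have "insert v F - {w} \<notin> Gam X r (Suc t)" using GsS by blast
        then have "z' (insert v F - {w}) = 0" using z'spt by blast
        then show "sg F v * cone w z' (insert v F) = 0" unfolding cone_def by simp
      qed
      ultimately show ?thesis by simp
    qed
    have "z F = bd (S' \<union> T) g F" for F
    proof -
      have "bd (S' \<union> T) g F = bd (S' \<union> T) G F + bd (S' \<union> T) (cone w z') F"
        unfolding g_def by (rule bd_add)
      moreover have "z F = bd (S' \<union> T) G F + z' F" unfolding z'_def by simp
      ultimately show ?thesis using cz[of F] by simp
    qed
    moreover have "g F \<noteq> 0 \<longrightarrow> F \<in> Gam X r (Suc t)" for F
    proof
      assume gnz: "g F \<noteq> 0"
      show "F \<in> Gam X r (Suc t)"
      proof (cases "G F = 0")
        case False then show ?thesis using Gsupp by blast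
      next
        case True
        then have "cone w z' F \<noteq> 0" using gnz unfolding g_def by simp
        then have wF: "w \<in> F" and nz: "z' (F - {w}) \<noteq> 0" unfolding cone_def by (metis mult_zero_right)+
        from z'low[OF nz] have H1: "F - {w} \<in> Gam X r (Suc t)" and H3: "card ((F - {w}) \<inter> T) < rt" by blast+
        from H1 have H: "F - {w} \<subseteq> S' \<union> T" "(F - {w}) \<inter> S' \<in> Gam X r t" unfolding Gs by blast+
        have e1: "F \<inter> S' = (F - {w}) \<inter> S'" using w disj by blast
        have e2: "F \<inter> T = insert w ((F - {w}) \<inter> T)" using w wF by auto
        have fin2: "finite ((F - {w}) \<inter> T)" using finT by simp
        have "card (F \<inter> T) \<le> rt" unfolding e2 using fin2 H3 by (simp add: card_insert_if)
        moreover have "F \<subseteq> S' \<union> T" using H w wF by blast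
        ultimately show ?thesis unfolding Gs using H(2) e1 by simp
      qed
    qed
    ultimately show ?thesis using U by auto
  qed
qed


lemma vs_fscale: "vector_space (fscale :: 'k::field \<Rightarrow> 'k kchain \<Rightarrow> 'k kchain)"
  by unfold_locales (auto simp: fscale_def fun_eq_iff algebra_simps)

lemma betti_zero:
  assumes "cycles_lift V E i j = (bounds_lift V E i j :: 'k::field kchain set)"
  shows "betti TYPE('k) V E i j = 0"
  unfolding betti_def assms by simp

definition mnus :: "(nat \<Rightarrow> nat) \<Rightarrow> nat set \<Rightarrow> nat \<Rightarrow> nat" where
  "mnus \<alpha> F = (\<lambda>v. \<alpha> v - (if v \<in> F then 1 else 0))"

definition pls :: "(nat \<Rightarrow> nat) \<Rightarrow> nat set \<Rightarrow> nat \<Rightarrow> nat" where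
  "pls m F = (\<lambda>v. m v + (if v \<in> F then 1 else 0))"

definition spt :: "(nat \<Rightarrow> nat) \<Rightarrow> nat set" where
  "spt \<alpha> = {v. 1 \<le> \<alpha> v}"

definition sig :: "'k kchain \<Rightarrow> (nat \<Rightarrow> nat) \<Rightarrow> nat set \<Rightarrow> 'k::field" where
  "sig c \<alpha> F = (if F \<subseteq> spt \<alpha> then c (mnus \<alpha> F, F) else 0)"

lemma minus_plus: "mnus (pls m F) F = m"
  unfolding mnus_def pls_def by auto

lemma plus_minus: "F \<subseteq> spt \<alpha> \<Longrightarrow> pls (mnus \<alpha> F) F = \<alpha>"
  unfolding mnus_def pls_def spt_def by (auto simp: fun_eq_iff)

lemma sum_plus: "finite V \<Longrightarrow> F \<subseteq> V \<Longrightarrow> (\<Sum>v\<in>V. pls m F v) = (\<Sum>v\<in>V. m v) + card F"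
  unfolding pls_def by (simp add: sum.distrib sum.If_cases Int_absorb1)

lemma sg_kdiff: "((-1::'k::comm_ring_1) ^ card {w\<in>F. w < v}) = sg F v"
  unfolding sg_def ..

lemma kdiff_alpha:
  fixes c :: "'k::field kchain"
  assumes V: "finite V" and aV: "\<forall>v. v \<notin> V \<longrightarrow> \<alpha> v = 0" and F: "F \<subseteq> spt \<alpha>"
  shows "kdiff V c (mnus \<alpha> F, F) = bd (spt \<alpha>) (sig c \<alpha>) F"
proof -
  have sV: "spt \<alpha> \<subseteq> V" using aV unfolding spt_def by (metis mem_Collect_eq not_one_le_zero subsetI)
  have "kdiff V c (mnus \<alpha> F, F) = (\<Sum>v\<in>V - F. if v \<in> spt \<alpha> then sg F v * sig c \<alpha> (insert v F) else 0)"
    unfolding kdiff_def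
  proof (simp only: prod.case, intro sum.cong refl)
    fix v assume v: "v \<in> V - F"
    have e: "(mnus \<alpha> F)(v := mnus \<alpha> F v - 1) = mnus \<alpha> (insert v F)"
      using v unfolding mnus_def by (auto simp: fun_eq_iff)
    have m: "mnus \<alpha> F v = \<alpha> v" using v unfolding mnus_def by simp
    show "(if 1 \<le> mnus \<alpha> F v then (- 1) ^ card {w \<in> F. w < v} * c ((mnus \<alpha> F)(v := mnus \<alpha> F v - 1), insert v F) else 0) =
          (if v \<in> spt \<alpha> then sg F v * sig c \<alpha> (insert v F) else 0)"
      using e m F v unfolding sg_kdiff sig_def by (auto simp: spt_def)
  qed
  also have "\<dots> = (\<Sum>v\<in>(V - F) \<inter> spt \<alpha>. sg F v * sig c \<alpha> (insert v F))"
    using V by (simp add: sum.If_cases)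
  also have "(V - F) \<inter> spt \<alpha> = spt \<alpha> - F" using sV by blast
  finally show ?thesis unfolding bd_def .
qed

lemma kdiff_kchains:
  assumes V: "finite V" and c: "c \<in> kchains V (Suc i) j"
  shows "kdiff V (c :: 'k::field kchain) \<in> kchains V i j"
  unfolding kchains_def
proof (safe)
  fix m F assume nb: "(m, F) \<notin> kbasis V i j"
  show "kdiff V c (m, F) = 0"
    unfolding kdiff_def prod.case
  proof (intro sum.neutral ballI)
    fix v assume v: "v \<in> V - F"
    show "(if 1 \<le> m v then (- 1) ^ card {w \<in> F. w < v} * c (m(v := m v - 1), insert v F) else 0) = 0"
    proof (cases "1 \<le> m v \<and> c (m(v := m v - 1), insert v F) \<noteq> 0")
      case False then show ?thesis by auto
    next
      case True
      then have kb: "(m(v := m v - 1), insert v F) \<in> kbasis V (Suc i) j"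
        using c unfolding kchains_def by blast
      then have A: "\<forall>u. u \<notin> V \<longrightarrow> (m(v := m v - 1)) u = 0" "insert v F \<subseteq> V" "card (insert v F) = Suc i"
        "(\<Sum>u\<in>V. (m(v := m v - 1)) u) + Suc i = j" unfolding kbasis_def by auto
      have "F \<subseteq> V" using A(2) by blast
      then have finF: "finite F" using V by (rule finite_subset)
      have "v \<notin> F" using v by blast
      then have cF: "card F = i" using A(3) finF by simp
      have mV: "\<forall>u. u \<notin> V \<longrightarrow> m u = 0"
      proof (intro allI impI)
        fix u assume u: "u \<notin> V"
        then have "u \<noteq> v" using v by blast
        have "(m(v := m v - 1)) u = 0" using A(1) u by simp
        then show "m u = 0" using \<open>u \<noteq> v\<close> by simp
      qed
      have "(\<Sum>u\<in>V. m u) = (\<Sum>u\<in>V. (m(v := m v - 1)) u) + 1"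
      proof -
        have vV: "v \<in> V" using v by blast
        have "(\<Sum>u\<in>V. m u) = m v + (\<Sum>u\<in>V - {v}. m u)" by (rule sum.remove[OF V vV])
        moreover have "(\<Sum>u\<in>V. (m(v := m v - 1)) u) = (m(v := m v - 1)) v + (\<Sum>u\<in>V - {v}. (m(v := m v - 1)) u)"
          by (rule sum.remove[OF V vV])
        moreover have "(\<Sum>u\<in>V - {v}. (m(v := m v - 1)) u) = (\<Sum>u\<in>V - {v}. m u)"
          by (intro sum.cong) auto
        ultimately show ?thesis using True by simp
      qed
      then have "(\<Sum>u\<in>V. m u) + i = j" using A(4) by simp
      then have "(m, F) \<in> kbasis V i j" using A(2) mV cF unfolding kbasis_def by blast
      then show ?thesis using nb by blast
    qed
  qed
qed

lemma glue:
  fixes V :: "nat set" and Edges :: "nat set set" and i j :: nat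
  assumes V: "finite V" and i: "1 \<le> i"
    and per: "\<And>\<alpha> (\<sigma> :: nat set \<Rightarrow> 'k::field). (\<forall>v. v \<notin> V \<longrightarrow> \<alpha> v = 0) \<Longrightarrow> (\<Sum>v\<in>V. \<alpha> v) = j \<Longrightarrow>
       (\<forall>F. \<sigma> F \<noteq> 0 \<longrightarrow> F \<subseteq> spt \<alpha> \<and> card F = i) \<Longrightarrow>
       (\<forall>F. F \<subseteq> spt \<alpha> \<longrightarrow> \<not> in_edge_ideal Edges (mnus \<alpha> F) \<longrightarrow> bd (spt \<alpha>) \<sigma> F = 0) \<Longrightarrow>
       \<exists>g. (\<forall>F. g F \<noteq> 0 \<longrightarrow> F \<subseteq> spt \<alpha> \<and> card F = Suc i) \<and>
           (\<forall>F. F \<subseteq> spt \<alpha> \<longrightarrow> \<not> in_edge_ideal Edges (mnus \<alpha> F) \<longrightarrow> \<sigma> F = bd (spt \<alpha>) g F)"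
  shows "cycles_lift V Edges i j \<subseteq> (bounds_lift V Edges i j :: 'k kchain set)"
proof
  fix c :: "'k kchain" assume "c \<in> cycles_lift V Edges i j"
  then have c: "c \<in> kchains V i j" and dc: "kdiff V c \<in> ideal_chains V Edges (i - 1) j"
    unfolding cycles_lift_def by auto
  define adm where "adm \<alpha> \<longleftrightarrow> (\<forall>v. v \<notin> V \<longrightarrow> \<alpha> v = 0) \<and> (\<Sum>v\<in>V. \<alpha> v) = j" for \<alpha>
  define good where "good \<alpha> g \<longleftrightarrow> (\<forall>F. g F \<noteq> 0 \<longrightarrow> F \<subseteq> spt \<alpha> \<and> card F = Suc i) \<and>
           (\<forall>F. F \<subseteq> spt \<alpha> \<longrightarrow> \<not> in_edge_ideal Edges (mnus \<alpha> F) \<longrightarrow> sig c \<alpha> F = bd (spt \<alpha>) g F)" for \<alpha> and g :: "nat set \<Rightarrow> 'k"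
  have ex: "\<exists>g. good \<alpha> g" if a: "adm \<alpha>" for \<alpha>
  proof -
    have a1: "\<forall>v. v \<notin> V \<longrightarrow> \<alpha> v = 0" "(\<Sum>v\<in>V. \<alpha> v) = j" using a unfolding adm_def by auto
    have h1: "\<forall>F. sig c \<alpha> F \<noteq> 0 \<longrightarrow> F \<subseteq> spt \<alpha> \<and> card F = i"
    proof (intro allI impI)
      fix F assume "sig c \<alpha> F \<noteq> 0"
      then have "F \<subseteq> spt \<alpha>" "c (mnus \<alpha> F, F) \<noteq> 0" unfolding sig_def by (auto split: if_splits)
      then show "F \<subseteq> spt \<alpha> \<and> card F = i" using c unfolding kchains_def kbasis_def by blast
    qed
    have h2: "\<forall>F. F \<subseteq> spt \<alpha> \<longrightarrow> \<not> in_edge_ideal Edges (mnus \<alpha> F) \<longrightarrow> bd (spt \<alpha>) (sig c \<alpha>) F = 0"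
    proof (intro allI impI)
      fix F assume F: "F \<subseteq> spt \<alpha>" and ni: "\<not> in_edge_ideal Edges (mnus \<alpha> F)"
      have "kdiff V c (mnus \<alpha> F, F) = 0" using dc ni unfolding ideal_chains_def by blast
      then show "bd (spt \<alpha>) (sig c \<alpha>) F = 0" using kdiff_alpha[OF V a1(1) F, of c] by simp
    qed
    show ?thesis using per[OF a1 h1 h2] unfolding good_def by blast
  qed
  define Gf where "Gf \<alpha> = (SOME g. good \<alpha> g)" for \<alpha>
  have Gf: "good \<alpha> (Gf \<alpha>)" if "adm \<alpha>" for \<alpha> unfolding Gf_def using someI_ex[OF ex[OF that]] .
  define g where "g p = (if p \<in> kbasis V (Suc i) j then Gf (pls (fst p) (snd p)) (snd p) else 0)" for p
  have gk: "g \<in> kchains V (Suc i) j" unfolding kchains_def g_def by auto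
  have dg: "kdiff V g \<in> kchains V i j" by (rule kdiff_kchains[OF V gk])
  define b where "b = c - kdiff V g"
  have bk: "b \<in> kchains V i j" using c dg unfolding b_def kchains_def by auto
  have bI: "in_edge_ideal Edges m" if nz: "b (m, F) \<noteq> 0" for m F
  proof (rule ccontr)
    assume ni: "\<not> in_edge_ideal Edges m"
    have kb: "(m, F) \<in> kbasis V i j" using nz bk unfolding kchains_def by blast
    then have mV: "\<forall>v. v \<notin> V \<longrightarrow> m v = 0" and FV: "F \<subseteq> V" and cF: "card F = i"
      and sm: "(\<Sum>v\<in>V. m v) + i = j" unfolding kbasis_def by auto
    define \<alpha> where "\<alpha> = pls m F"
    have am: "mnus \<alpha> F = m" unfolding \<alpha>_def by (rule minus_plus)
    have Fs: "F \<subseteq> spt \<alpha>" unfolding \<alpha>_def pls_def spt_def by auto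
    have a: "adm \<alpha>" unfolding adm_def \<alpha>_def using mV FV sum_plus[OF V FV, of m] sm cF
      by (auto simp: pls_def)
    have a1: "\<forall>v. v \<notin> V \<longrightarrow> \<alpha> v = 0" using a unfolding adm_def by auto
    have sV: "spt \<alpha> \<subseteq> V" using a1 unfolding spt_def by (metis mem_Collect_eq not_one_le_zero subsetI)
    have finF: "finite F" using FV V finite_subset by blast
    have gd: "good \<alpha> (Gf \<alpha>)" by (rule Gf[OF a])
    have "c (m, F) = sig c \<alpha> F" unfolding sig_def using Fs am by simp
    also have "\<dots> = bd (spt \<alpha>) (Gf \<alpha>) F" using gd Fs ni am unfolding good_def by simp
    also have "\<dots> = bd (spt \<alpha>) (sig g \<alpha>) F"
    proof (rule bd_cong)
      fix v assume v: "v \<in> spt \<alpha> - F"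
      let ?H = "insert v F"
      have Hs: "?H \<subseteq> spt \<alpha>" using v Fs by auto
      have HV: "?H \<subseteq> V" using Hs sV by auto
      have cH: "card ?H = Suc i" using v finF cF by simp
      have ss: "(\<Sum>u\<in>V. mnus \<alpha> ?H u) + card ?H = (\<Sum>u\<in>V. \<alpha> u)"
        using sum_plus[OF V HV, of "mnus \<alpha> ?H"] plus_minus[OF Hs] by simp
      have "(mnus \<alpha> ?H, ?H) \<in> kbasis V (Suc i) j"
        unfolding kbasis_def using a1 HV cH ss a unfolding adm_def by (auto simp: mnus_def)
      then show "Gf \<alpha> ?H = sig g \<alpha> ?H"
        unfolding sig_def g_def using Hs plus_minus[OF Hs] by simp
    qed
    also have "\<dots> = kdiff V g (m, F)" using kdiff_alpha[OF V a1 Fs, of g] am by simp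
    finally have "b (m, F) = 0" unfolding b_def by simp
    then show False using nz by simp
  qed
  have "b \<in> ideal_chains V Edges i j" unfolding ideal_chains_def using bk bI by blast
  moreover have "c = kdiff V g + b" unfolding b_def by simp
  ultimately show "c \<in> bounds_lift V Edges i j" unfolding bounds_lift_def using gk by blast
qed

lemma kdiff_add: "kdiff V (f + g) = kdiff V f + (kdiff V g :: 'k::field kchain)"
  unfolding kdiff_def by (auto simp: fun_eq_iff sum.distrib[symmetric] algebra_simps intro!: sum.cong)

lemma kdiff_nz:
  assumes "kdiff V d (m, F) \<noteq> 0"
  shows "\<exists>v\<in>V - F. 1 \<le> m v \<and> d (m(v := m v - 1), insert v F) \<noteq> 0"
proof (rule ccontr)
  assume "\<not> ?thesis"
  then have "\<forall>v\<in>V - F. (if 1 \<le> m v then (- 1) ^ card {w \<in> F. w < v} * d (m(v := m v - 1), insert v F) else 0) = 0"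
    by auto
  then have "kdiff V d (m, F) = 0" unfolding kdiff_def prod.case by (rule sum.neutral)
  then show False using assms by simp
qed

definition vsupp :: "nat set \<Rightarrow> 'k::field kchain \<Rightarrow> bool" where
  "vsupp V d \<longleftrightarrow> (\<forall>m F. d (m, F) \<noteq> 0 \<longrightarrow> (\<forall>u. u \<notin> V \<longrightarrow> m u = 0) \<and> F \<subseteq> V)"

lemma vsupp_kdiff:
  assumes d: "vsupp V d"
  shows "vsupp V (kdiff V d)"
  unfolding vsupp_def
proof (intro allI impI)
  fix m F assume "kdiff V d (m, F) \<noteq> 0"
  then obtain v where v: "v \<in> V - F" and nz: "d (m(v := m v - 1), insert v F) \<noteq> 0"
    using kdiff_nz by blast
  then have A: "\<forall>u. u \<notin> V \<longrightarrow> (m(v := m v - 1)) u = 0" "insert v F \<subseteq> V"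
    using d unfolding vsupp_def by blast+
  have "\<forall>u. u \<notin> V \<longrightarrow> m u = 0"
  proof (intro allI impI)
    fix u assume u: "u \<notin> V"
    then have "u \<noteq> v" using v by blast
    have "(m(v := m v - 1)) u = 0" using A(1) u by simp
    then show "m u = 0" using \<open>u \<noteq> v\<close> by simp
  qed
  then show "(\<forall>u. u \<notin> V \<longrightarrow> m u = 0) \<and> F \<subseteq> V" using A(2) by blast
qed

lemma kchains_vsupp: "c \<in> kchains V i j \<Longrightarrow> vsupp V c"
  unfolding kchains_def vsupp_def kbasis_def by blast

lemma kdiff_kdiff:
  assumes V: "finite V" and d: "vsupp V (c :: 'k::field kchain)"
  shows "kdiff V (kdiff V c) p = 0"
proof (rule ccontr)
  assume nz: "kdiff V (kdiff V c) p \<noteq> 0"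
  obtain m F where p: "p = (m, F)" by (cases p)
  have mF: "\<forall>u. u \<notin> V \<longrightarrow> m u = 0" "F \<subseteq> V"
    using vsupp_kdiff[OF vsupp_kdiff[OF d]] nz p unfolding vsupp_def by blast+
  define \<alpha> where "\<alpha> = pls m F"
  have am: "mnus \<alpha> F = m" unfolding \<alpha>_def by (rule minus_plus)
  have Fs: "F \<subseteq> spt \<alpha>" unfolding \<alpha>_def pls_def spt_def by auto
  have a1: "\<forall>v. v \<notin> V \<longrightarrow> \<alpha> v = 0" using mF unfolding \<alpha>_def pls_def by auto
  have sV: "spt \<alpha> \<subseteq> V" using a1 unfolding spt_def by (metis mem_Collect_eq not_one_le_zero subsetI)
  have fs: "finite (spt \<alpha>)" using sV V by (rule finite_subset)
  have "kdiff V (kdiff V c) p = bd (spt \<alpha>) (sig (kdiff V c) \<alpha>) F"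
    using kdiff_alpha[OF V a1 Fs, of "kdiff V c"] am p by simp
  also have "\<dots> = bd (spt \<alpha>) (bd (spt \<alpha>) (sig c \<alpha>)) F"
  proof (rule bd_cong)
    fix v assume v: "v \<in> spt \<alpha> - F"
    then have Hs: "insert v F \<subseteq> spt \<alpha>" using Fs by blast
    show "sig (kdiff V c) \<alpha> (insert v F) = bd (spt \<alpha>) (sig c \<alpha>) (insert v F)"
      unfolding sig_def[of "kdiff V c"] using Hs kdiff_alpha[OF V a1 Hs, of c] by simp
  qed
  also have "\<dots> = 0" by (rule bd_bd[OF fs])
  finally show False using nz by simp
qed

lemma ideal_mono:
  assumes "in_edge_ideal E m" "\<And>u. 1 \<le> m u \<Longrightarrow> 1 \<le> m' u"
  shows "in_edge_ideal E m'"
  using assms unfolding in_edge_ideal_def by blast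

lemma bounds_sub_cycles:
  assumes V: "finite V" and i: "1 \<le> i"
  shows "bounds_lift V E i j \<subseteq> (cycles_lift V E i j :: 'k::field kchain set)"
proof
  fix x :: "'k kchain" assume "x \<in> bounds_lift V E i j"
  then obtain c b where x: "x = kdiff V c + b" and c: "c \<in> kchains V (Suc i) j"
    and b: "b \<in> ideal_chains V E i j" unfolding bounds_lift_def by blast
  have bk: "b \<in> kchains V i j" using b unfolding ideal_chains_def by blast
  have dc: "kdiff V c \<in> kchains V i j" by (rule kdiff_kchains[OF V c])
  have xk: "x \<in> kchains V i j" using dc bk unfolding x kchains_def by auto
  have i1: "Suc (i - 1) = i" using i by simp
  have dbk: "kdiff V b \<in> kchains V (i - 1) j" by (rule kdiff_kchains[OF V]) (use bk i1 in simp)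
  have ddc: "kdiff V (kdiff V c) = 0" using kdiff_kdiff[OF V kchains_vsupp[OF c]] by (auto simp: fun_eq_iff)
  have dx: "kdiff V x = kdiff V b" unfolding x kdiff_add ddc by simp
  have "kdiff V b \<in> ideal_chains V E (i - 1) j"
    unfolding ideal_chains_def
  proof (intro CollectI conjI allI impI dbk)
    fix m F assume "kdiff V b (m, F) \<noteq> 0"
    then obtain v where v: "v \<in> V - F" and nz: "1 \<le> m v \<and> b (m(v := m v - 1), insert v F) \<noteq> 0"
      using kdiff_nz by blast
    then have "in_edge_ideal E (m(v := m v - 1))" using b unfolding ideal_chains_def by blast
    then show "in_edge_ideal E m" by (rule ideal_mono) (auto split: if_splits)
  qed
  then show "x \<in> cycles_lift V E i j" unfolding cycles_lift_def using xk dx by simp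
qed


lemma caseA:
  fixes \<sigma> :: "nat set \<Rightarrow> 'k::field"
  assumes S: "finite S" and w: "w \<in> S"
    and sup: "\<forall>F. \<sigma> F \<noteq> 0 \<longrightarrow> F \<subseteq> S \<and> card F = i"
    and rc: "\<forall>F. F \<subseteq> S \<longrightarrow> \<not> Q F \<longrightarrow> bd S \<sigma> F = 0"
    and cp: "\<forall>F. F \<subseteq> S \<longrightarrow> Q F \<longrightarrow> Q (insert w F)"
  shows "\<exists>g. (\<forall>F. g F \<noteq> 0 \<longrightarrow> F \<subseteq> S \<and> card F = Suc i) \<and> (\<forall>F. F \<subseteq> S \<longrightarrow> \<not> Q F \<longrightarrow> \<sigma> F = bd S g F)"
proof -
  have P1: "\<forall>G. cone w \<sigma> G \<noteq> 0 \<longrightarrow> G \<subseteq> S \<and> card G = Suc i"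
  proof (intro allI impI)
  fix G assume "cone w \<sigma> G \<noteq> 0"
  then have wG: "w \<in> G" unfolding cone_def by (cases "w \<in> G") auto
  have nz: "\<sigma> (G - {w}) \<noteq> 0" using \<open>cone w \<sigma> G \<noteq> 0\<close> wG unfolding cone_def by auto
  then have A: "G - {w} \<subseteq> S" "card (G - {w}) = i" using sup by blast+
  have fG: "finite G" using A(1) S by (metis finite_Diff2 finite.emptyI finite_insert finite_subset)
  show "G \<subseteq> S \<and> card G = Suc i" using A wG w fG by (metis card_Diff1_less card.infinite card_Suc_Diff1 insert_Diff insert_subset)
  qed
  have P2: "\<forall>F. F \<subseteq> S \<longrightarrow> \<not> Q F \<longrightarrow> \<sigma> F = bd S (cone w \<sigma>) F"
  proof (intro allI impI)
  fix F assume F: "F \<subseteq> S" and nq: "\<not> Q F"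
  have "cone w (bd S \<sigma>) F = 0"
  proof (cases "w \<in> F")
    case True
    have "\<not> Q (F - {w})"
    proof
      assume "Q (F - {w})"
      then have "Q (insert w (F - {w}))" using cp F by blast
      then show False using nq True by (simp add: insert_absorb)
    qed
    then have "bd S \<sigma> (F - {w}) = 0" using rc F by blast
    then show ?thesis unfolding cone_def by simp
  qed (simp add: cone_def)
  then show "\<sigma> F = bd S (cone w \<sigma>) F" using cone_identity[OF S w F, of \<sigma>] by simp
  qed
  show ?thesis using P1 P2 by blast
qed

lemma caseB:
  fixes \<sigma> :: "nat set \<Rightarrow> 'k::field"
  assumes S: "finite S" and w: "w \<in> S"
    and sup: "\<forall>F. \<sigma> F \<noteq> 0 \<longrightarrow> F \<subseteq> S \<and> card F = i"
    and rc: "\<forall>F. F \<subseteq> S \<longrightarrow> \<not> Q F \<longrightarrow> bd S \<sigma> F = 0"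
    and i: "1 \<le> i" and iR: "i - 1 \<noteq> R"
    and key: "\<And>z :: nat set \<Rightarrow> 'k. (\<forall>F. z F \<noteq> 0 \<longrightarrow> F \<subseteq> S \<and> Q F \<and> card F \<noteq> R) \<Longrightarrow> (\<forall>F. bd S z F = 0)
       \<Longrightarrow> \<exists>\<gamma>. (\<forall>F. \<gamma> F \<noteq> 0 \<longrightarrow> F \<subseteq> S \<and> Q F) \<and> (\<forall>F. z F = bd S \<gamma> F)"
  shows "\<exists>g. (\<forall>F. g F \<noteq> 0 \<longrightarrow> F \<subseteq> S \<and> card F = Suc i) \<and> (\<forall>F. F \<subseteq> S \<longrightarrow> \<not> Q F \<longrightarrow> \<sigma> F = bd S g F)"
proof -
  define z where "z F = bd S \<sigma> F" for F
  have zs: "\<forall>F. z F \<noteq> 0 \<longrightarrow> F \<subseteq> S \<and> Q F \<and> card F \<noteq> R"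
  proof (intro allI impI)
    fix F assume "z F \<noteq> 0"
    then obtain v where v: "v \<in> S - F" and nz: "\<sigma> (insert v F) \<noteq> 0" unfolding z_def using bd_nz by blast
    then have A: "insert v F \<subseteq> S" "card (insert v F) = i" using sup by blast+
    have F: "F \<subseteq> S" using A by blast
    have fF: "finite F" using F S by (rule finite_subset)
    have "v \<notin> F" using v by blast
    then have "card F = i - 1" using A(2) fF by simp
    moreover have "Q F" using rc F \<open>z F \<noteq> 0\<close> unfolding z_def by blast
    ultimately show "F \<subseteq> S \<and> Q F \<and> card F \<noteq> R" using F iR by simp
  qed
  have zc: "\<forall>F. bd S z F = 0" unfolding z_def using bd_bd[OF S] by blast
  obtain \<gamma> where gs: "\<forall>F. \<gamma> F \<noteq> 0 \<longrightarrow> F \<subseteq> S \<and> Q F" and gz: "\<forall>F. z F = bd S \<gamma> F"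
    using key[OF zs zc] by blast
  define \<delta> where "\<delta> F = \<sigma> F - \<gamma> F" for F
  have dc: "bd S \<delta> F = 0" for F unfolding \<delta>_def bd_diff using gz unfolding z_def by simp
  define g where "g G = (if card G = Suc i then cone w \<delta> G else 0)" for G
  have P1: "\<forall>G. g G \<noteq> 0 \<longrightarrow> G \<subseteq> S \<and> card G = Suc i"
  proof (intro allI impI)
    fix G assume "g G \<noteq> 0"
    then have c: "card G = Suc i" and "cone w \<delta> G \<noteq> 0" unfolding g_def by (auto split: if_splits)
    then have wG: "w \<in> G" unfolding cone_def by (cases "w \<in> G") auto
    have nz: "\<delta> (G - {w}) \<noteq> 0" using \<open>cone w \<delta> G \<noteq> 0\<close> wG unfolding cone_def by auto
    then have "\<sigma> (G - {w}) \<noteq> 0 \<or> \<gamma> (G - {w}) \<noteq> 0" unfolding \<delta>_def by auto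
    then have "G - {w} \<subseteq> S" using sup gs by blast
    then show "G \<subseteq> S \<and> card G = Suc i" using c w by blast
  qed
  have P2: "\<forall>F. F \<subseteq> S \<longrightarrow> \<not> Q F \<longrightarrow> \<sigma> F = bd S g F"
  proof (intro allI impI)
    fix F assume F: "F \<subseteq> S" and nq: "\<not> Q F"
    have fF: "finite F" using F S by (rule finite_subset)
    show "\<sigma> F = bd S g F"
    proof (cases "card F = i")
      case True
      have "bd S g F = bd S (cone w \<delta>) F"
      proof (rule bd_cong)
        fix v assume "v \<in> S - F"
        then have "card (insert v F) = Suc i" using True fF by simp
        then show "g (insert v F) = cone w \<delta> (insert v F)" unfolding g_def by simp
      qed
      moreover have "cone w (bd S \<delta>) F = 0" unfolding cone_def dc by simp
      moreover have "\<gamma> F = 0" using gs nq by blast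
      ultimately show ?thesis using cone_identity[OF S w F, of \<delta>] unfolding \<delta>_def by simp
    next
      case False
      then have "\<sigma> F = 0" using sup by blast
      moreover have "bd S g F = 0"
        unfolding bd_def
      proof (intro sum.neutral ballI)
        fix v assume "v \<in> S - F"
        then have "card (insert v F) \<noteq> Suc i" using False fF by simp
        then show "sg F v * g (insert v F) = 0" unfolding g_def by simp
      qed
      ultimately show ?thesis by simp
    qed
  qed
  show ?thesis using P1 P2 by blast
qed


lemma block_start_mono: "s \<le> s' \<Longrightarrow> (\<Sum>r<s. n r) \<le> (\<Sum>r<s'. (n::nat\<Rightarrow>nat) r)"
  by (rule sum_mono2) auto

lemma block_ord:
  assumes "s < s'" "x \<in> block n s" "y \<in> block n s'"
  shows "x < y"
proof -
  have "x < (\<Sum>r<s. n r) + n s" using assms(2) unfolding block_def by auto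
  also have "\<dots> = (\<Sum>r<Suc s. n r)" by simp
  also have "\<dots> \<le> (\<Sum>r<s'. n r)" using assms(1) by (intro block_start_mono) simp
  also have "\<dots> \<le> y" using assms(3) unfolding block_def by auto
  finally show ?thesis .
qed

lemma block_disj: "s \<noteq> s' \<Longrightarrow> block n s \<inter> block n s' = {}"
proof (rule ccontr)
  assume ne: "s \<noteq> s'" and "block n s \<inter> block n s' \<noteq> {}"
  then obtain x where x: "x \<in> block n s" "x \<in> block n s'" by blast
  show False
  proof (cases "s < s'")
    case True then show False using block_ord[OF True x] by simp
  next
    case False then have "s' < s" using ne by simp
    then show False using block_ord[OF _ x(2) x(1)] by simp
  qed
qed

lemma finite_block: "finite (block n s)" unfolding block_def by simp

lemma finite_mpv: "finite (mp_vertices t n)" unfolding mp_vertices_def using finite_block by auto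

lemma mp_translate:
  assumes aV: "\<forall>v. v \<notin> mp_vertices t n \<longrightarrow> \<alpha> v = 0" and sq: "\<forall>v\<in>spt \<alpha>. \<alpha> v = 1"
    and F: "F \<subseteq> spt \<alpha>"
  shows "in_edge_ideal (mp_edges t n a) (mnus \<alpha> F) \<longleftrightarrow>
         (\<forall>s<t. a s + card (F \<inter> (spt \<alpha> \<inter> block n s)) \<le> card (spt \<alpha> \<inter> block n s))"
proof -
  define S where "S = spt \<alpha>"
  define X where "X s = S \<inter> block n s" for s
  have m1: "1 \<le> mnus \<alpha> F u \<longleftrightarrow> u \<in> S - F" for u
    using sq F unfolding mnus_def S_def spt_def by auto
  have finX: "finite (X s)" for s unfolding X_def using finite_block by blast
  have cXF: "card (X s - F) = card (X s) - card (F \<inter> X s)" for s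
  proof -
    have "X s - F = X s - (F \<inter> X s)" by blast
    moreover have "card (X s - (F \<inter> X s)) = card (X s) - card (F \<inter> X s)"
      using finX[of s] by (intro card_Diff_subset) auto
    ultimately show ?thesis by simp
  qed
  have "in_edge_ideal (mp_edges t n a) (mnus \<alpha> F) \<longleftrightarrow> (\<exists>E\<in>mp_edges t n a. E \<subseteq> S - F)"
    unfolding in_edge_ideal_def using m1 by blast
  also have "\<dots> \<longleftrightarrow> (\<forall>s<t. a s + card (F \<inter> X s) \<le> card (X s))"
  proof
    assume "\<exists>E\<in>mp_edges t n a. E \<subseteq> S - F"
    then obtain E where E: "E \<in> mp_edges t n a" "E \<subseteq> S - F" by blast
    show "\<forall>s<t. a s + card (F \<inter> X s) \<le> card (X s)"
    proof (intro allI impI)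
      fix s assume s: "s < t"
      have "card (E \<inter> block n s) = a s" using E(1) s unfolding mp_edges_def by blast
      moreover have "E \<inter> block n s \<subseteq> X s - F" using E(2) unfolding X_def by blast
      moreover have "card (E \<inter> block n s) \<le> card (X s - F)" using finX[of s] \<open>E \<inter> block n s \<subseteq> X s - F\<close>
        by (intro card_mono) auto
      ultimately have "a s \<le> card (X s - F)" by simp
      moreover have "card (F \<inter> X s) \<le> card (X s)" using finX[of s] by (intro card_mono) auto
      ultimately show "a s + card (F \<inter> X s) \<le> card (X s)" unfolding cXF by simp
    qed
  next
    assume H: "\<forall>s<t. a s + card (F \<inter> X s) \<le> card (X s)"
    have ex: "\<exists>T. T \<subseteq> X s - F \<and> card T = a s" if "s < t" for s
    proof -
      have "a s \<le> card (X s - F)" using H that unfolding cXF by auto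
      then obtain T where "T \<subseteq> X s - F" "card T = a s" by (rule obtain_subset_with_card_n)
      then show ?thesis by blast
    qed
    define Es where "Es s = (SOME T. T \<subseteq> X s - F \<and> card T = a s)" for s
    have Es: "Es s \<subseteq> X s - F \<and> card (Es s) = a s" if "s < t" for s
      unfolding Es_def using someI_ex[OF ex[OF that]] .
    define E where "E = (\<Union>s<t. Es s)"
    have ES: "E \<subseteq> S - F" and EV: "E \<subseteq> mp_vertices t n"
    proof -
      have "Es s \<subseteq> (S - F) \<inter> block n s" if "s < t" for s using Es[OF that] unfolding X_def by blast
      then show "E \<subseteq> S - F" "E \<subseteq> mp_vertices t n" unfolding E_def mp_vertices_def by fast+
    qed
    have "card (E \<inter> block n s) = a s" if s: "s < t" for s
    proof -
      have "E \<inter> block n s = Es s"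
      proof
        have "Es s \<subseteq> block n s" using Es[OF s] unfolding X_def by blast
        moreover have "Es s \<subseteq> E" unfolding E_def using s by blast
        ultimately show "Es s \<subseteq> E \<inter> block n s" by blast
        show "E \<inter> block n s \<subseteq> Es s"
        proof
          fix x assume x: "x \<in> E \<inter> block n s"
          then obtain s' where s': "s' < t" "x \<in> Es s'" unfolding E_def by blast
          have "Es s' \<subseteq> block n s'" using Es[OF s'(1)] unfolding X_def by blast
          then have "x \<in> block n s'" using s'(2) by blast
          then have "s' = s" using x block_disj[of s' s n] by blast
          then show "x \<in> Es s" using s' by simp
        qed
      qed
      then show ?thesis using Es[OF s] by simp
    qed
    then have "E \<in> mp_edges t n a" unfolding mp_edges_def using EV by blast
    then show "\<exists>E\<in>mp_edges t n a. E \<subseteq> S - F" using ES by blast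
  qed
  finally show ?thesis unfolding X_def S_def .
qed

lemma per_mp:
  fixes \<alpha> :: "nat \<Rightarrow> nat" and \<sigma> :: "nat set \<Rightarrow> 'k::field"
  assumes aV: "\<forall>v. v \<notin> mp_vertices t n \<longrightarrow> \<alpha> v = 0"
    and sj: "(\<Sum>v\<in>mp_vertices t n. \<alpha> v) = j"
    and jne: "j \<noteq> i + d - 1" and i: "1 \<le> i" and d: "d = (\<Sum>s<t. a s)"
    and sup: "\<forall>F. \<sigma> F \<noteq> 0 \<longrightarrow> F \<subseteq> spt \<alpha> \<and> card F = i"
    and rc: "\<forall>F. F \<subseteq> spt \<alpha> \<longrightarrow> \<not> in_edge_ideal (mp_edges t n a) (mnus \<alpha> F) \<longrightarrow> bd (spt \<alpha>) \<sigma> F = 0"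
  shows "\<exists>g. (\<forall>F. g F \<noteq> 0 \<longrightarrow> F \<subseteq> spt \<alpha> \<and> card F = Suc i) \<and>
           (\<forall>F. F \<subseteq> spt \<alpha> \<longrightarrow> \<not> in_edge_ideal (mp_edges t n a) (mnus \<alpha> F) \<longrightarrow> \<sigma> F = bd (spt \<alpha>) g F)"
proof -
  define S where "S = spt \<alpha>"
  define V where "V = mp_vertices t n"
  define Q where "Q F \<longleftrightarrow> in_edge_ideal (mp_edges t n a) (mnus \<alpha> F)" for F
  have sV: "S \<subseteq> V" using aV unfolding S_def V_def spt_def by (metis mem_Collect_eq not_one_le_zero subsetI)
  have fV: "finite V" unfolding V_def by (rule finite_mpv)
  have fS: "finite S" using sV fV by (rule finite_subset)
  have sup': "\<forall>F. \<sigma> F \<noteq> 0 \<longrightarrow> F \<subseteq> S \<and> card F = i" using sup unfolding S_def .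
  have rc': "\<forall>F. F \<subseteq> S \<longrightarrow> \<not> Q F \<longrightarrow> bd S \<sigma> F = 0" using rc unfolding S_def Q_def .
  have "\<exists>g. (\<forall>F. g F \<noteq> 0 \<longrightarrow> F \<subseteq> S \<and> card F = Suc i) \<and> (\<forall>F. F \<subseteq> S \<longrightarrow> \<not> Q F \<longrightarrow> \<sigma> F = bd S g F)"
  proof (cases "S = {}")
    case True
    have "\<sigma> F = 0" for F
    proof (rule ccontr)
      assume "\<sigma> F \<noteq> 0"
      then have "F \<subseteq> S" "card F = i" using sup' by blast+
      then show False using True i by simp
    qed
    then show ?thesis by (intro exI[of _ "\<lambda>_. 0"]) (simp add: bd_def)
  next
    case False
    then obtain w0 where w0: "w0 \<in> S" by blast
    show ?thesis
    proof (cases "\<exists>w\<in>S. \<forall>F. F \<subseteq> S \<longrightarrow> Q F \<longrightarrow> Q (insert w F)")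
      case True
      then obtain w where "w \<in> S" "\<forall>F. F \<subseteq> S \<longrightarrow> Q F \<longrightarrow> Q (insert w F)" by blast
      then show ?thesis using caseA[OF fS _ sup' rc'] by blast
    next
      case noc: False
      have sq: "\<forall>v\<in>S. \<alpha> v = 1"
      proof
        fix v assume v: "v \<in> S"
        show "\<alpha> v = 1"
        proof (rule ccontr)
          assume "\<alpha> v \<noteq> 1"
          then have a2: "2 \<le> \<alpha> v" using v unfolding S_def spt_def by simp
          have "\<forall>F. F \<subseteq> S \<longrightarrow> Q F \<longrightarrow> Q (insert v F)"
          proof (intro allI impI)
            fix F assume "Q F"
            then show "Q (insert v F)" unfolding Q_def
              by (rule ideal_mono) (use a2 in \<open>auto simp: mnus_def split: if_splits\<close>)
          qed
          then show False using noc v by blast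
        qed
      qed
      have Ia: "Q {}"
      proof (rule ccontr)
        assume nI: "\<not> Q {}"
        have "\<forall>F. F \<subseteq> S \<longrightarrow> Q F \<longrightarrow> Q (insert w0 F)"
        proof (intro allI impI)
          fix F assume "Q F"
          then have "Q {}" unfolding Q_def
            by (rule ideal_mono) (auto simp: mnus_def split: if_splits)
          then show "Q (insert w0 F)" using nI by blast
        qed
        then show False using noc w0 by blast
      qed
      define X where "X s = S \<inter> block n s" for s
      define r where "r s = card (X s) - a s" for s
      have finX: "finite (X s)" for s unfolding X_def using finite_block by blast
      have tr: "Q F \<longleftrightarrow> (\<forall>s<t. a s + card (F \<inter> X s) \<le> card (X s))" if "F \<subseteq> S" for F
        unfolding Q_def X_def S_def using mp_translate[OF aV sq[unfolded S_def] that[unfolded S_def]] .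
      have aX: "a s \<le> card (X s)" if "s < t" for s using tr[of "{}"] Ia that by simp
      have UU: "UU X t = S" unfolding UU_def X_def using sV unfolding V_def mp_vertices_def by blast
      have QG: "Q F \<longleftrightarrow> F \<in> Gam X r t" if "F \<subseteq> S" for F
      proof -
        have "(a s + card (F \<inter> X s) \<le> card (X s)) \<longleftrightarrow> card (F \<inter> X s) \<le> r s" if "s < t" for s
          using aX[OF that] unfolding r_def by arith
        then show ?thesis unfolding tr[OF \<open>F \<subseteq> S\<close>] Gam_def UU using \<open>F \<subseteq> S\<close> by auto
      qed
      have disjX: "X s \<inter> X s' = {}" if "s \<noteq> s'" for s s' unfolding X_def using block_disj[OF that, of n] by blast
      have cS: "card S = (\<Sum>s<t. card (X s))"
      proof -
        have "card (\<Union>s<t. X s) = (\<Sum>s<t. card (X s))"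
          by (rule card_UN_disjoint) (use finX disjX in auto)
        then show ?thesis using UU unfolding UU_def by simp
      qed
      have jS: "j = card S"
      proof -
        have "j = (\<Sum>v\<in>V. (if v \<in> S then 1 else 0))" unfolding sj[symmetric] V_def[symmetric]
          using sq aV unfolding S_def V_def spt_def by (intro sum.cong) auto
        also have "\<dots> = card (V \<inter> S)" using fV by (simp add: sum.If_cases)
        also have "V \<inter> S = S" using sV by blast
        finally show ?thesis .
      qed
      define R where "R = (\<Sum>s<t. r s)"
      have R: "R = card S - d" unfolding R_def r_def cS d using aX by (subst sum_subtractf_nat) auto
      have dS: "d \<le> card S" unfolding cS d using aX by (intro sum_mono) simp
      have iR: "i - 1 \<noteq> R" using jne jS R dS i by arith
      have ord: "\<And>s s' x y. s < s' \<Longrightarrow> x \<in> X s \<Longrightarrow> y \<in> X s' \<Longrightarrow> x < y"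
        unfolding X_def using block_ord by blast
      have rle: "r s \<le> card (X s)" for s unfolding r_def by simp
      have key: "\<exists>\<gamma>. (\<forall>F. \<gamma> F \<noteq> 0 \<longrightarrow> F \<subseteq> S \<and> Q F) \<and> (\<forall>F. z F = bd S \<gamma> F)"
        if z1: "\<forall>F. z F \<noteq> 0 \<longrightarrow> F \<subseteq> S \<and> Q F \<and> card F \<noteq> R" and z2: "\<forall>F. bd S z F = 0"
        for z :: "nat set \<Rightarrow> 'k"
      proof -
        have h1: "\<forall>F. z F \<noteq> 0 \<longrightarrow> F \<in> Gam X r t \<and> card F \<noteq> (\<Sum>s<t. r s)"
          using z1 QG unfolding R_def by blast
        have h2: "\<forall>F. bd (UU X t) z F = 0" using z2 unfolding UU .
        have "\<exists>g. (\<forall>F. g F \<noteq> 0 \<longrightarrow> F \<in> Gam X r t) \<and> (\<forall>F. z F = bd (UU X t) g F)"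
          by (rule key_lemma[where X=X and r=r and t=t and z=z]) (fact finX rle ord h1 h2)+
        then obtain \<gamma> where g1: "\<forall>F. \<gamma> F \<noteq> 0 \<longrightarrow> F \<in> Gam X r t" and g2: "\<forall>F. z F = bd (UU X t) \<gamma> F"
          by blast
        have "\<forall>F. \<gamma> F \<noteq> 0 \<longrightarrow> F \<subseteq> S \<and> Q F"
        proof (intro allI impI)
          fix F assume "\<gamma> F \<noteq> 0"
          then have G: "F \<in> Gam X r t" using g1 by blast
          then have "F \<subseteq> S" unfolding Gam_def UU by blast
          then show "F \<subseteq> S \<and> Q F" using QG G by blast
        qed
        then show ?thesis using g2 unfolding UU by blast
      qed
      show ?thesis by (rule caseB[OF fS w0 sup' rc' i iR key]) blast+
    qed
  qed
  then show ?thesis unfolding S_def Q_def .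
qed

theorem lemma3p15:
  fixes t :: nat and n a :: "nat \<Rightarrow> nat" and d :: nat
  assumes "t \<ge> 1"
    and "\<forall>s<t. n s \<ge> 1"
    and "\<forall>s<t. a s \<ge> 1"
    and "d = (\<Sum>s<t. a s)"
    and "d \<ge> 2"
  shows "linear_resolution TYPE('k::field) (mp_vertices t n) (mp_edges t n a)
       \<and> (\<forall>i\<ge>1. \<forall>j. betti TYPE('k) (mp_vertices t n) (mp_edges t n a) i j \<noteq> 0
                      \<longrightarrow> j = i + (d - 1))"
proof -
  have fV: "finite (mp_vertices t n)" by (rule finite_mpv)
  have Z: "betti TYPE('k) (mp_vertices t n) (mp_edges t n a) i j = 0" if i: "1 \<le> i" and j: "j \<noteq> i + d - 1" for i j
  proof (rule betti_zero)
    have "cycles_lift (mp_vertices t n) (mp_edges t n a) i j \<subseteq> (bounds_lift (mp_vertices t n) (mp_edges t n a) i j :: 'k kchain set)"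
    proof (rule glue[OF fV i])
      fix \<alpha> :: "nat \<Rightarrow> nat" and \<sigma> :: "nat set \<Rightarrow> 'k"
      assume "\<forall>v. v \<notin> mp_vertices t n \<longrightarrow> \<alpha> v = 0" "(\<Sum>v\<in>mp_vertices t n. \<alpha> v) = j"
        "\<forall>F. \<sigma> F \<noteq> 0 \<longrightarrow> F \<subseteq> spt \<alpha> \<and> card F = i"
        "\<forall>F. F \<subseteq> spt \<alpha> \<longrightarrow> \<not> in_edge_ideal (mp_edges t n a) (mnus \<alpha> F) \<longrightarrow> bd (spt \<alpha>) \<sigma> F = 0"
      then show "\<exists>g. (\<forall>F. g F \<noteq> 0 \<longrightarrow> F \<subseteq> spt \<alpha> \<and> card F = Suc i) \<and>
           (\<forall>F. F \<subseteq> spt \<alpha> \<longrightarrow> \<not> in_edge_ideal (mp_edges t n a) (mnus \<alpha> F) \<longrightarrow> \<sigma> F = bd (spt \<alpha>) g F)"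
        using per_mp[OF _ _ j i assms(4)] by blast
    qed
    moreover have "bounds_lift (mp_vertices t n) (mp_edges t n a) i j \<subseteq> (cycles_lift (mp_vertices t n) (mp_edges t n a) i j :: 'k kchain set)"
      by (rule bounds_sub_cycles[OF fV i])
    ultimately show "cycles_lift (mp_vertices t n) (mp_edges t n a) i j = (bounds_lift (mp_vertices t n) (mp_edges t n a) i j :: 'k kchain set)"
      by blast
  qed
  have "linear_resolution TYPE('k) (mp_vertices t n) (mp_edges t n a)"
    unfolding linear_resolution_def using Z by blast
  moreover have "\<forall>i\<ge>1. \<forall>j. betti TYPE('k) (mp_vertices t n) (mp_edges t n a) i j \<noteq> 0 \<longrightarrow> j = i + (d - 1)"
    using Z assms(5) by (metis Nat.add_diff_assoc le_trans one_le_numeral)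
  ultimately show ?thesis by blast
qed

end
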